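(* Let $D$ be an infinite integral domain of characteristic different from $2$, and let $\mathbb{O}=(((D,\alpha),\beta),\gamma)$ be the Cayley–Dickson (octonion) algebra over $D$ with its $\mathbb{Z}_2^3$-grading from the Cayley–Dickson process. Then $T_{\mathbb{Z}_2^3}(\mathbb{O})$ is generated, as a graded $T$-ideal, by the identities \begin{align*} [x_1,x_2]=0, &\quad |\langle g(x_1),g(x_2)\rangle|\le 2;\\ x_1\circ x_2=0, &\quad |\langle g(x_1),g(x_2)\rangle|\ge 4;\\ (x_1,x_2,x_3)=0, &\quad |\langle g(x_1),g(x_2),g(x_3)\rangle|\le 4;\\ (x_1x_2)x_3+x_1(x_2x_3)=0, &\quad \langle g(x_1),g(x_2),g(x_3)\rangle=\mathbb{Z}_2^3. \end{align*}
   Context: Cayley–Dickson process: if $A$ is a unital algebra over a commutative ring with an involution $a\mapsto\bar a$ and $\alpha\neq 0$ a scalar, $(A,\alpha)=A\oplus A$ with product $(a_1,a_2)(a_3,a_4)=(a_1a_3+\alpha a_4\bar a_2,\ \bar a_1a_4+a_3a_2)$ and involution $\overline{(a_1,a_2)}=(\bar a_1,-a_2)$. If $A$ is $G$-graded, $(A,\alpha)$ is $G\times\mathbb{Z}_2$-graded by $(A,\alpha)_{(h,0)}=A_h\oplus 0$, $(A,\alpha)_{(h,1)}=0\oplus A_h$. Here $D$ has trivial involution and trivial grading and $\alpha,\beta,\gamma\in D\setminus\{0\}$; groups written additively. Graded identities: $D_G\{X\}$ is the free nonassociative $D$-algebra on variables $x_i^a$ ($a\in G$), graded by $g(x_i^a)=a$,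 $g(uv)=g(u)g(v)$. $f(x_1,\dots,x_n)$ is a graded identity of $A$ if $f(a_1,\dots,a_n)=0$ for all $a_i\in A_{g(x_i)}$; $T_G(A)$ is the set of these. A graded $T$-ideal is an ideal invariant under all graded endomorphisms (variables sent to elements of the same degree). $[x,y]=xy-yx$, $x\circ y=xy+yx$, $(x,y,z)=(xy)z-x(yz)$; $\langle\cdot\rangle$ denotes generated subgroup. *)

theory Defs
  imports Main "HOL-Library.Product_Plus" "HOL-Library.Poly_Mapping"
begin

type_synonym grp = "bool \<times> bool \<times> bool"

definition gadd :: "grp \<Rightarrow> grp \<Rightarrow> grp" where
  "gadd a b = (fst a \<noteq> fst b, fst (snd a) \<noteq> fst (snd b), snd (snd a) \<noteq> snd (snd b))"

definition gzero :: grp where "gzero = (False, False, False)"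

inductive_set gsub :: "grp set \<Rightarrow> grp set" for S :: "grp set" where
  gsub_zero: "gzero \<in> gsub S"
| gsub_gen: "s \<in> S \<Longrightarrow> s \<in> gsub S"
| gsub_add: "a \<in> gsub S \<Longrightarrow> b \<in> gsub S \<Longrightarrow> gadd a b \<in> gsub S"

definition cd_mult :: "('b::plus \<Rightarrow> 'b \<Rightarrow> 'b) \<Rightarrow> ('b \<Rightarrow> 'b) \<Rightarrow> ('s \<Rightarrow> 'b \<Rightarrow> 'b) \<Rightarrow> 's
    \<Rightarrow> 'b \<times> 'b \<Rightarrow> 'b \<times> 'b \<Rightarrow> 'b \<times> 'b" where
  "cd_mult mul cj sm \<alpha> x y =
     (mul (fst x) (fst y) + sm \<alpha> (mul (snd y) (cj (snd x))),
      mul (cj (fst x)) (snd y) + mul (fst y) (snd x))"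

definition cd_conj :: "('b::uminus \<Rightarrow> 'b) \<Rightarrow> 'b \<times> 'b \<Rightarrow> 'b \<times> 'b" where
  "cd_conj cj x = (cj (fst x), - snd x)"

definition cd_smul :: "('s \<Rightarrow> 'b \<Rightarrow> 'b) \<Rightarrow> 's \<Rightarrow> 'b \<times> 'b \<Rightarrow> 'b \<times> 'b" where
  "cd_smul sm c x = (sm c (fst x), sm c (snd x))"

text \<open>Grading of (A,alpha) by G x Z_2 from a G-grading C of A.\<close>
definition cd_comp :: "('g \<Rightarrow> 'b::zero set) \<Rightarrow> 'g \<Rightarrow> bool \<Rightarrow> ('b \<times> 'b) set" where
  "cd_comp C h b = (if b then {(0, a) | a. a \<in> C h} else {(a, 0) | a. a \<in> C h})"

type_synonym 'a oct = "(('a \<times> 'a) \<times> ('a \<times> 'a)) \<times> (('a \<times> 'a) \<times> ('a \<times> 'a))"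

definition mult1 :: "'a::comm_ring_1 \<Rightarrow> 'a \<times> 'a \<Rightarrow> 'a \<times> 'a \<Rightarrow> 'a \<times> 'a" where
  "mult1 \<alpha> = cd_mult (*) id (*) \<alpha>"
definition conj1 :: "'a::comm_ring_1 \<times> 'a \<Rightarrow> 'a \<times> 'a" where "conj1 = cd_conj id"
definition smul1 :: "'a::comm_ring_1 \<Rightarrow> 'a \<times> 'a \<Rightarrow> 'a \<times> 'a" where "smul1 = cd_smul (*)"
definition comp1 :: "bool \<Rightarrow> ('a::comm_ring_1 \<times> 'a) set" where
  "comp1 b = cd_comp (\<lambda>_::unit. UNIV) () b"

definition mult2 :: "'a::comm_ring_1 \<Rightarrow> 'a \<Rightarrow> ('a \<times> 'a) \<times> ('a \<times> 'a) \<Rightarrow> ('a \<times> 'a) \<times> ('a \<times> 'a) \<Rightarrow> ('a \<times> 'a) \<times> ('a \<times> 'a)" where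
  "mult2 \<alpha> \<beta> = cd_mult (mult1 \<alpha>) conj1 smul1 \<beta>"
definition conj2 :: "('a::comm_ring_1 \<times> 'a) \<times> ('a \<times> 'a) \<Rightarrow> ('a \<times> 'a) \<times> ('a \<times> 'a)" where
  "conj2 = cd_conj conj1"
definition smul2 :: "'a::comm_ring_1 \<Rightarrow> ('a \<times> 'a) \<times> ('a \<times> 'a) \<Rightarrow> ('a \<times> 'a) \<times> ('a \<times> 'a)" where
  "smul2 = cd_smul smul1"
definition comp2 :: "bool \<times> bool \<Rightarrow> (('a::comm_ring_1 \<times> 'a) \<times> ('a \<times> 'a)) set" where
  "comp2 h = cd_comp comp1 (fst h) (snd h)"

text \<open>Level 3: the octonion algebra (((D,alpha),beta),gamma), Z_2^3-graded;
  degree (b1,b2,b3): b1 from the alpha-step, b2 from beta, b3 from gamma.\<close>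
definition oct_mult :: "'a::comm_ring_1 \<Rightarrow> 'a \<Rightarrow> 'a \<Rightarrow> 'a oct \<Rightarrow> 'a oct \<Rightarrow> 'a oct" where
  "oct_mult \<alpha> \<beta> \<gamma> = cd_mult (mult2 \<alpha> \<beta>) conj2 smul2 \<gamma>"
definition oct_smul :: "'a::comm_ring_1 \<Rightarrow> 'a oct \<Rightarrow> 'a oct" where
  "oct_smul = cd_smul smul2"
definition oct_comp :: "grp \<Rightarrow> ('a::comm_ring_1) oct set" where
  "oct_comp g = cd_comp comp2 (fst g, fst (snd g)) (snd (snd g))"

datatype mon = Var nat grp | Mul mon mon

fun mdeg :: "mon \<Rightarrow> grp" where
  "mdeg (Var i a) = a"
| "mdeg (Mul u v) = gadd (mdeg u) (mdeg v)"

type_synonym 'a fa = "mon \<Rightarrow>\<^sub>0 'a"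

definition fa_var :: "nat \<Rightarrow> grp \<Rightarrow> 'a::comm_ring_1 fa" where
  "fa_var i a = Poly_Mapping.single (Var i a) 1"

definition fa_smul :: "'a::comm_ring_1 \<Rightarrow> 'a fa \<Rightarrow> 'a fa" where
  "fa_smul c p = (\<Sum>m\<in>Poly_Mapping.keys p. Poly_Mapping.single m (c * Poly_Mapping.lookup p m))"

definition fa_mult :: "'a::comm_ring_1 fa \<Rightarrow> 'a fa \<Rightarrow> 'a fa" where
  "fa_mult p q = (\<Sum>m\<in>Poly_Mapping.keys p. \<Sum>n\<in>Poly_Mapping.keys q. Poly_Mapping.single (Mul m n) (Poly_Mapping.lookup p m * Poly_Mapping.lookup q n))"

definition fa_homog :: "grp \<Rightarrow> 'a::comm_ring_1 fa \<Rightarrow> bool" where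
  "fa_homog g p \<longleftrightarrow> (\<forall>m\<in>Poly_Mapping.keys p. mdeg m = g)"

fun msubst :: "(nat \<Rightarrow> grp \<Rightarrow> 'a::comm_ring_1 fa) \<Rightarrow> mon \<Rightarrow> 'a fa" where
  "msubst \<sigma> (Var i a) = \<sigma> i a"
| "msubst \<sigma> (Mul u v) = fa_mult (msubst \<sigma> u) (msubst \<sigma> v)"

definition fa_subst :: "(nat \<Rightarrow> grp \<Rightarrow> 'a::comm_ring_1 fa) \<Rightarrow> 'a fa \<Rightarrow> 'a fa" where
  "fa_subst \<sigma> p = (\<Sum>m\<in>Poly_Mapping.keys p. fa_smul (Poly_Mapping.lookup p m) (msubst \<sigma> m))"

definition graded_subst :: "(nat \<Rightarrow> grp \<Rightarrow> 'a::comm_ring_1 fa) \<Rightarrow> bool" where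
  "graded_subst \<sigma> \<longleftrightarrow> (\<forall>i a. fa_homog a (\<sigma> i a))"

inductive_set gTideal :: "'a::comm_ring_1 fa set \<Rightarrow> 'a fa set" for S :: "'a fa set" where
  gT_gen: "p \<in> S \<Longrightarrow> p \<in> gTideal S"
| gT_zero: "0 \<in> gTideal S"
| gT_add: "p \<in> gTideal S \<Longrightarrow> q \<in> gTideal S \<Longrightarrow> p + q \<in> gTideal S"
| gT_smul: "p \<in> gTideal S \<Longrightarrow> fa_smul c p \<in> gTideal S"
| gT_multl: "p \<in> gTideal S \<Longrightarrow> fa_mult r p \<in> gTideal S"
| gT_multr: "p \<in> gTideal S \<Longrightarrow> fa_mult p r \<in> gTideal S"
| gT_subst: "p \<in> gTideal S \<Longrightarrow> graded_subst \<sigma> \<Longrightarrow> fa_subst \<sigma> p \<in> gTideal S"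

fun oct_meval :: "'a::comm_ring_1 \<Rightarrow> 'a \<Rightarrow> 'a \<Rightarrow> (nat \<Rightarrow> grp \<Rightarrow> 'a oct) \<Rightarrow> mon \<Rightarrow> 'a oct" where
  "oct_meval \<alpha> \<beta> \<gamma> \<phi> (Var i a) = \<phi> i a"
| "oct_meval \<alpha> \<beta> \<gamma> \<phi> (Mul u v) = oct_mult \<alpha> \<beta> \<gamma> (oct_meval \<alpha> \<beta> \<gamma> \<phi> u) (oct_meval \<alpha> \<beta> \<gamma> \<phi> v)"

definition oct_eval :: "'a::comm_ring_1 \<Rightarrow> 'a \<Rightarrow> 'a \<Rightarrow> (nat \<Rightarrow> grp \<Rightarrow> 'a oct) \<Rightarrow> 'a fa \<Rightarrow> 'a oct" where
  "oct_eval \<alpha> \<beta> \<gamma> \<phi> p = (\<Sum>m\<in>Poly_Mapping.keys p. oct_smul (Poly_Mapping.lookup p m) (oct_meval \<alpha> \<beta> \<gamma> \<phi> m))"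

definition oct_TG :: "'a::comm_ring_1 \<Rightarrow> 'a \<Rightarrow> 'a \<Rightarrow> 'a fa set" where
  "oct_TG \<alpha> \<beta> \<gamma> = {p. \<forall>\<phi>. (\<forall>i a. \<phi> i a \<in> oct_comp a) \<longrightarrow> oct_eval \<alpha> \<beta> \<gamma> \<phi> p = 0}"

definition fa_comm :: "'a::comm_ring_1 fa \<Rightarrow> 'a fa \<Rightarrow> 'a fa" where
  "fa_comm x y = fa_mult x y - fa_mult y x"
definition fa_jordan :: "'a::comm_ring_1 fa \<Rightarrow> 'a fa \<Rightarrow> 'a fa" where
  "fa_jordan x y = fa_mult x y + fa_mult y x"
definition fa_assoc :: "'a::comm_ring_1 fa \<Rightarrow> 'a fa \<Rightarrow> 'a fa \<Rightarrow> 'a fa" where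
  "fa_assoc x y z = fa_mult (fa_mult x y) z - fa_mult x (fa_mult y z)"

definition oct_gens :: "'a::comm_ring_1 fa set" where
  "oct_gens =
     {fa_comm (fa_var 1 a) (fa_var 2 b) | a b. card (gsub {a, b}) \<le> 2}
   \<union> {fa_jordan (fa_var 1 a) (fa_var 2 b) | a b. card (gsub {a, b}) \<ge> 4}
   \<union> {fa_assoc (fa_var 1 a) (fa_var 2 b) (fa_var 3 c) | a b c. card (gsub {a, b, c}) \<le> 4}
   \<union> {fa_mult (fa_mult (fa_var 1 a) (fa_var 2 b)) (fa_var 3 c)
        + fa_mult (fa_var 1 a) (fa_mult (fa_var 2 b) (fa_var 3 c)) | a b c. gsub {a, b, c} = UNIV}"

end

theory Submission
  imports Defs "HOL-Library.Product_Lexorder" "HOL-Library.Multiset" "HOL-Computational_Algebra.Polynomial"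
begin

definition negs :: "grp \<Rightarrow> grp \<Rightarrow> bool" where
  "negs a b = (case a of (a1,a2,a3) \<Rightarrow> case b of (b1,b2,b3) \<Rightarrow>
     (a2\<and>b3) \<noteq> ((a2\<and>a3\<and>b1) \<noteq> ((a1\<and>b3) \<noteq> ((a1\<and>b2) \<noteq> ((a1\<and>a3\<and>b2) \<noteq> (a1\<and>a2\<and>b3))))))"

definition cc :: "'a::comm_ring_1 \<Rightarrow> 'a \<Rightarrow> 'a \<Rightarrow> grp \<Rightarrow> grp \<Rightarrow> 'a" where
  "cc \<alpha> \<beta> \<gamma> a b = (if negs a b then -1 else 1) *
     ((if fst a \<and> fst b then \<alpha> else 1) * (if fst (snd a) \<and> fst (snd b) then \<beta> else 1) *
      (if snd (snd a) \<and> snd (snd b) then \<gamma> else 1))"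

definition e1 :: "bool \<Rightarrow> 'a::comm_ring_1 \<times> 'a" where "e1 b = (if b then (0,1) else (1,0))"
definition e2 :: "bool \<times> bool \<Rightarrow> ('a::comm_ring_1 \<times> 'a) \<times> ('a \<times> 'a)" where
  "e2 b = (if snd b then (0, e1 (fst b)) else (e1 (fst b), 0))"
definition ee :: "grp \<Rightarrow> 'a::comm_ring_1 oct" where
  "ee g = (if snd (snd g) then (0, e2 (fst g, fst (snd g))) else (e2 (fst g, fst (snd g)), 0))"

lemma e_mult: "oct_mult \<alpha> \<beta> \<gamma> (ee a) (ee b) = oct_smul (cc \<alpha> \<beta> \<gamma> a b) (ee (gadd a b))"
  apply (cases a; cases b)
  apply (auto simp: oct_mult_def mult2_def Defs.mult1_def cd_mult_def conj2_def conj1_def cd_conj_def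
      smul2_def smul1_def cd_smul_def oct_smul_def ee_def e2_def e1_def cc_def negs_def gadd_def)
  done

definition dep3 :: "grp \<Rightarrow> grp \<Rightarrow> grp \<Rightarrow> bool" where
  "dep3 a b c \<longleftrightarrow> a = gzero \<or> b = gzero \<or> c = gzero \<or> a = b \<or> a = c \<or> b = c \<or> gadd a b = c"

lemma negs_anti0: "(a1,a2,a3) \<noteq> gzero \<Longrightarrow> (b1,b2,b3) \<noteq> gzero \<Longrightarrow> (a1,a2,a3) \<noteq> (b1,b2,b3) \<Longrightarrow> negs (a1,a2,a3) (b1,b2,b3) \<noteq> negs (b1,b2,b3) (a1,a2,a3)"
  by (cases a1; cases a2; cases a3; cases b1; cases b2; cases b3; simp add: negs_def gzero_def)

lemma negs_assoc0: "(negs (a1,a2,a3) (b1,b2,b3) \<noteq> negs (gadd (a1,a2,a3) (b1,b2,b3)) (c1,c2,c3)) = (negs (b1,b2,b3) (c1,c2,c3) \<noteq> negs (a1,a2,a3) (gadd (b1,b2,b3) (c1,c2,c3))) \<longleftrightarrow> dep3 (a1,a2,a3) (b1,b2,b3) (c1,c2,c3)"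
  by (cases a1; cases a2; cases a3; cases b1; cases b2; cases b3; cases c1; cases c2; cases c3; simp add: dep3_def negs_def gzero_def gadd_def)


lemma card3: "let S = {gzero,(a1,a2,a3),(b1,b2,b3),(c1,c2,c3),gadd (a1,a2,a3) (b1,b2,b3),
   gadd (a1,a2,a3) (c1,c2,c3), gadd (b1,b2,b3) (c1,c2,c3), gadd (gadd (a1,a2,a3) (b1,b2,b3)) (c1,c2,c3)}
   in (card S \<le> 4 \<longleftrightarrow> dep3 (a1,a2,a3) (b1,b2,b3) (c1,c2,c3)) \<and> (card S \<le> 4 \<or> card S = 8)"
  by (cases a1; cases a2; cases a3; cases b1; cases b2; cases b3; cases c1; cases c2; cases c3; simp add: Let_def dep3_def gzero_def gadd_def card_insert_if)

lemma "card (UNIV :: grp set) = 8"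
  by (simp add: UNIV_Times_UNIV[symmetric] card_cartesian_product del: UNIV_Times_UNIV)

lemmas octdefs = oct_mult_def mult2_def Defs.mult1_def cd_mult_def conj2_def conj1_def cd_conj_def
      smul2_def smul1_def cd_smul_def oct_smul_def

lemma oct_smul_add: "oct_smul c (x + y) = oct_smul c x + oct_smul c (y::'a::comm_ring_1 oct)"
  by (simp add: octdefs prod_eq_iff algebra_simps)
lemma oct_smul_zero[simp]: "oct_smul c (0::'a::comm_ring_1 oct) = 0"
  by (simp add: octdefs prod_eq_iff)
lemma oct_smul_0[simp]: "oct_smul 0 (x::'a::comm_ring_1 oct) = 0"
  by (simp add: octdefs prod_eq_iff)
lemma oct_smul_1[simp]: "oct_smul 1 (x::'a::comm_ring_1 oct) = x"
  by (simp add: octdefs prod_eq_iff)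
lemma oct_smul_smul: "oct_smul a (oct_smul b x) = oct_smul (a*b) (x::'a::comm_ring_1 oct)"
  by (simp add: octdefs prod_eq_iff algebra_simps)
lemma oct_smul_addc: "oct_smul (a+b) x = oct_smul a x + oct_smul b (x::'a::comm_ring_1 oct)"
  by (simp add: octdefs prod_eq_iff algebra_simps)
lemma oct_smul_minus: "oct_smul c (x - y) = oct_smul c x - oct_smul c (y::'a::comm_ring_1 oct)"
  by (simp add: octdefs prod_eq_iff algebra_simps)
lemma oct_smul_uminus: "oct_smul c (- y) = - oct_smul c (y::'a::comm_ring_1 oct)"
  by (simp add: octdefs prod_eq_iff algebra_simps)
lemma oct_smul_m1: "oct_smul (-1) y = - (y::'a::comm_ring_1 oct)"
  by (simp add: octdefs prod_eq_iff algebra_simps)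
lemma oct_smul_sum: "oct_smul c (\<Sum>i\<in>A. f i) = (\<Sum>i\<in>A. oct_smul c (f i :: 'a::comm_ring_1 oct))"
  by (induction A rule: infinite_finite_induct) (auto simp: oct_smul_add)

lemma oct_mult_addl: "oct_mult \<alpha> \<beta> \<gamma> (x + y) z = oct_mult \<alpha> \<beta> \<gamma> x z + oct_mult \<alpha> \<beta> \<gamma> y (z::'a::comm_ring_1 oct)"
  by (simp add: octdefs prod_eq_iff algebra_simps)
lemma oct_mult_addr: "oct_mult \<alpha> \<beta> \<gamma> z (x + y) = oct_mult \<alpha> \<beta> \<gamma> z x + oct_mult \<alpha> \<beta> \<gamma> z (y::'a::comm_ring_1 oct)"
  by (simp add: octdefs prod_eq_iff algebra_simps)
lemma oct_mult_0l[simp]: "oct_mult \<alpha> \<beta> \<gamma> 0 (z::'a::comm_ring_1 oct) = 0"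
  by (simp add: octdefs prod_eq_iff algebra_simps)
lemma oct_mult_0r[simp]: "oct_mult \<alpha> \<beta> \<gamma> z (0::'a::comm_ring_1 oct) = 0"
  by (simp add: octdefs prod_eq_iff algebra_simps)
lemma oct_mult_smull: "oct_mult \<alpha> \<beta> \<gamma> (oct_smul c x) z = oct_smul c (oct_mult \<alpha> \<beta> \<gamma> x (z::'a::comm_ring_1 oct))"
  by (simp add: octdefs prod_eq_iff algebra_simps)
lemma oct_mult_smulr: "oct_mult \<alpha> \<beta> \<gamma> z (oct_smul c x) = oct_smul c (oct_mult \<alpha> \<beta> \<gamma> z (x::'a::comm_ring_1 oct))"
  by (simp add: octdefs prod_eq_iff algebra_simps)
lemma oct_mult_suml: "oct_mult \<alpha> \<beta> \<gamma> (\<Sum>i\<in>A. f i) z = (\<Sum>i\<in>A. oct_mult \<alpha> \<beta> \<gamma> (f i) (z::'a::comm_ring_1 oct))"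
  by (induction A rule: infinite_finite_induct) (auto simp: oct_mult_addl)
lemma oct_mult_sumr: "oct_mult \<alpha> \<beta> \<gamma> z (\<Sum>i\<in>A. f i) = (\<Sum>i\<in>A. oct_mult \<alpha> \<beta> \<gamma> z (f i :: 'a::comm_ring_1 oct))"
  by (induction A rule: infinite_finite_induct) (auto simp: oct_mult_addr)


abbreviation PK where "PK \<equiv> Poly_Mapping.keys"
abbreviation PL where "PL \<equiv> Poly_Mapping.lookup"


lemma sum_keys_superset:
  assumes "finite S" "PK p \<subseteq> S" "\<And>m. F m 0 = (0::'b::comm_monoid_add)"
  shows "(\<Sum>m\<in>PK p. F m (PL p m)) = (\<Sum>m\<in>S. F m (PL p m))"
  by (rule sum.mono_neutral_left) (use assms in \<open>auto simp: in_keys_iff\<close>)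

lemma pm_sum_single: "(\<Sum>m\<in>PK p. Poly_Mapping.single m (PL p m)) = p"
proof (rule poly_mapping_eqI)
  fix k
  show "PL (\<Sum>m\<in>PK p. Poly_Mapping.single m (PL p m)) k = PL p k"
    by (cases "k \<in> PK p") (auto simp: lookup_sum lookup_single when_def in_keys_iff)
qed

lemma lookup_fa_smul[simp]: "PL (fa_smul c p) n = c * PL (p::'a::comm_ring_1 fa) n"
proof -
  have "PL (fa_smul c p) n = (\<Sum>m\<in>PK p. (c * PL p m when m = n))"
    by (simp add: fa_smul_def lookup_sum lookup_single)
  also have "\<dots> = c * PL p n"
    by (cases "n \<in> PK p") (auto simp: when_def in_keys_iff)
  finally show ?thesis .
qed

lemma fa_smul_add: "fa_smul c (p + q) = fa_smul c p + fa_smul c (q::'a::comm_ring_1 fa)"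
  by (rule poly_mapping_eqI) (simp add: lookup_add algebra_simps)
lemma fa_smul_minus: "fa_smul c (p - q) = fa_smul c p - fa_smul c (q::'a::comm_ring_1 fa)"
  by (rule poly_mapping_eqI) (simp add: lookup_minus algebra_simps)
lemma fa_smul_1[simp]: "fa_smul 1 p = (p::'a::comm_ring_1 fa)"
  by (rule poly_mapping_eqI) simp
lemma fa_smul_0[simp]: "fa_smul 0 p = (0::'a::comm_ring_1 fa)"
  by (rule poly_mapping_eqI) simp
lemma fa_smul_zero[simp]: "fa_smul c 0 = (0::'a::comm_ring_1 fa)"
  by (rule poly_mapping_eqI) simp
lemma fa_smul_smul: "fa_smul a (fa_smul b p) = fa_smul (a*b) (p::'a::comm_ring_1 fa)"
  by (rule poly_mapping_eqI) (simp add: algebra_simps)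
lemma fa_smul_m1: "fa_smul (-1) p = - (p::'a::comm_ring_1 fa)"
  by (rule poly_mapping_eqI) simp
lemma fa_smul_single: "fa_smul c (Poly_Mapping.single m a) = Poly_Mapping.single m (c * (a::'a::comm_ring_1))"
  by (rule poly_mapping_eqI) (simp add: lookup_single when_def)
lemma fa_smul_sum: "fa_smul c (\<Sum>i\<in>A. f i) = (\<Sum>i\<in>A. fa_smul c (f i :: 'a::comm_ring_1 fa))"
  by (induction A rule: infinite_finite_induct) (auto simp: fa_smul_add)

lemma fa_mult_alt:
  assumes "finite S" "PK p \<subseteq> S" "finite T" "PK q \<subseteq> T"
  shows "fa_mult p q = (\<Sum>m\<in>S. \<Sum>n\<in>T. Poly_Mapping.single (Mul m n) (PL p m * PL (q::'a::comm_ring_1 fa) n))"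
proof -
  have "fa_mult p q = (\<Sum>m\<in>PK p. \<Sum>n\<in>T. Poly_Mapping.single (Mul m n) (PL p m * PL q n))"
    unfolding fa_mult_def
  proof (rule sum.cong[OF refl])
    fix m
    show "(\<Sum>n\<in>PK q. Poly_Mapping.single (Mul m n) (PL p m * PL q n)) =
          (\<Sum>n\<in>T. Poly_Mapping.single (Mul m n) (PL p m * PL q n))"
      by (rule sum_keys_superset[where F="\<lambda>n c. Poly_Mapping.single (Mul m n) (PL p m * c)"])
         (use assms in auto)
  qed
  also have "\<dots> = (\<Sum>m\<in>S. \<Sum>n\<in>T. Poly_Mapping.single (Mul m n) (PL p m * PL q n))"
    by (rule sum_keys_superset[where F="\<lambda>m c. \<Sum>n\<in>T. Poly_Mapping.single (Mul m n) (c * PL q n)"])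
       (use assms in auto)
  finally show ?thesis .
qed

lemma fa_mult_addl: "fa_mult (p1 + p2) q = fa_mult p1 q + fa_mult p2 (q::'a::comm_ring_1 fa)"
proof -
  let ?S = "PK p1 \<union> PK p2"
  have k: "PK (p1 + p2) \<subseteq> ?S" by (rule keys_add)
  show ?thesis
    by (simp add: fa_mult_alt[of ?S _ "PK q"] k lookup_add algebra_simps single_add sum.distrib)
qed
lemma fa_mult_addr: "fa_mult q (p1 + p2) = fa_mult q p1 + fa_mult q (p2::'a::comm_ring_1 fa)"
proof -
  let ?S = "PK p1 \<union> PK p2"
  have k: "PK (p1 + p2) \<subseteq> ?S" by (rule keys_add)
  show ?thesis
    by (simp add: fa_mult_alt[of "PK q" _ ?S] k lookup_add algebra_simps single_add sum.distrib)
qed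
lemma fa_mult_smull: "fa_mult (fa_smul c p) q = fa_smul c (fa_mult p (q::'a::comm_ring_1 fa))"
proof -
  have k: "PK (fa_smul c p) \<subseteq> PK p" by (auto simp: in_keys_iff)
  show ?thesis
    by (simp add: fa_mult_alt[of "PK p" _ "PK q"] k fa_smul_sum fa_smul_single mult.assoc)
qed
lemma fa_mult_smulr: "fa_mult q (fa_smul c p) = fa_smul c (fa_mult q (p::'a::comm_ring_1 fa))"
proof -
  have k: "PK (fa_smul c p) \<subseteq> PK p" by (auto simp: in_keys_iff)
  show ?thesis
    by (simp add: fa_mult_alt[of "PK q" _ "PK p"] k fa_smul_sum fa_smul_single algebra_simps)
qed
lemma fa_mult_minusl: "fa_mult (p1 - p2) q = fa_mult p1 q - fa_mult p2 (q::'a::comm_ring_1 fa)"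
  by (metis add_diff_cancel diff_add_cancel fa_mult_addl)
lemma fa_mult_minusr: "fa_mult q (p1 - p2) = fa_mult q p1 - fa_mult q (p2::'a::comm_ring_1 fa)"
  by (metis add_diff_cancel diff_add_cancel fa_mult_addr)
lemma fa_mult_single: "fa_mult (Poly_Mapping.single m a) (Poly_Mapping.single n b) = Poly_Mapping.single (Mul m n) (a * (b::'a::comm_ring_1))"
  by (simp add: fa_mult_alt[of "{m}" _ "{n}"])


lemma fa_smul_addc: "fa_smul (a + b) q = fa_smul a q + fa_smul b (q::'a::comm_ring_1 fa)"
  by (rule poly_mapping_eqI) (simp add: lookup_add algebra_simps)
lemma fa_smul_minusc: "fa_smul (a - b) q = fa_smul a q - fa_smul b (q::'a::comm_ring_1 fa)"
  by (rule poly_mapping_eqI) (simp add: lookup_minus algebra_simps)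

lemma fa_subst_alt:
  assumes "finite S" "PK p \<subseteq> S"
  shows "fa_subst \<sigma> p = (\<Sum>m\<in>S. fa_smul (PL p m) (msubst \<sigma> m :: 'a::comm_ring_1 fa))"
  unfolding fa_subst_def
  by (rule sum_keys_superset[where F="\<lambda>m c. fa_smul c (msubst \<sigma> m)"]) (use assms in auto)

lemma keys_minus: "PK (p - q) \<subseteq> PK p \<union> PK (q::'a::ab_group_add fa)"
  by (auto simp: in_keys_iff lookup_minus)

lemma fa_subst_add: "fa_subst \<sigma> (p + q) = fa_subst \<sigma> p + fa_subst \<sigma> (q::'a::comm_ring_1 fa)"
  using keys_add[of p q]
  by (simp add: fa_subst_alt[of "PK p \<union> PK q"] lookup_add sum.distrib fa_smul_addc)
lemma fa_subst_minus: "fa_subst \<sigma> (p - q) = fa_subst \<sigma> p - fa_subst \<sigma> (q::'a::comm_ring_1 fa)"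
  using keys_minus[of p q]
  by (simp add: fa_subst_alt[of "PK p \<union> PK q"] lookup_minus sum_subtractf fa_smul_minusc)
lemma fa_subst_single: "fa_subst \<sigma> (Poly_Mapping.single m c) = fa_smul c (msubst \<sigma> m :: 'a::comm_ring_1 fa)"
  by (simp add: fa_subst_alt[of "{m}"])

lemma oct_eval_alt:
  assumes "finite S" "PK p \<subseteq> S"
  shows "oct_eval \<alpha> \<beta> \<gamma> \<phi> p = (\<Sum>m\<in>S. oct_smul (PL p m) (oct_meval \<alpha> \<beta> \<gamma> \<phi> m :: 'a::comm_ring_1 oct))"
  unfolding oct_eval_def
  by (rule sum_keys_superset[where F="\<lambda>m c. oct_smul c (oct_meval \<alpha> \<beta> \<gamma> \<phi> m)"]) (use assms in auto)

lemma oct_eval_add: "oct_eval \<alpha> \<beta> \<gamma> \<phi> (p + q) = oct_eval \<alpha> \<beta> \<gamma> \<phi> p + oct_eval \<alpha> \<beta> \<gamma> \<phi> (q::'a::comm_ring_1 fa)"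
  using keys_add[of p q]
  by (simp add: oct_eval_alt[of "PK p \<union> PK q"] lookup_add sum.distrib oct_smul_addc)
lemma oct_eval_minus: "oct_eval \<alpha> \<beta> \<gamma> \<phi> (p - q) = oct_eval \<alpha> \<beta> \<gamma> \<phi> p - oct_eval \<alpha> \<beta> \<gamma> \<phi> (q::'a::comm_ring_1 fa)"
proof -
  have "oct_smul (a - b) x = oct_smul a x - oct_smul b (x::'a oct)" for a b x
    by (metis add_diff_cancel diff_add_cancel oct_smul_addc)
  then show ?thesis using keys_minus[of p q]
    by (simp add: oct_eval_alt[of "PK p \<union> PK q"] lookup_minus sum_subtractf)
qed
lemma oct_eval_zero[simp]: "oct_eval \<alpha> \<beta> \<gamma> \<phi> (0::'a::comm_ring_1 fa) = 0"
  by (simp add: oct_eval_def)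
lemma oct_eval_smul: "oct_eval \<alpha> \<beta> \<gamma> \<phi> (fa_smul c p) = oct_smul c (oct_eval \<alpha> \<beta> \<gamma> \<phi> (p::'a::comm_ring_1 fa))"
proof -
  have k: "PK (fa_smul c p) \<subseteq> PK p" by (auto simp: in_keys_iff)
  show ?thesis
    by (simp add: oct_eval_alt[of "PK p"] k oct_smul_sum oct_smul_smul)
qed
lemma oct_eval_single: "oct_eval \<alpha> \<beta> \<gamma> \<phi> (Poly_Mapping.single m c) = oct_smul c (oct_meval \<alpha> \<beta> \<gamma> \<phi> m :: 'a::comm_ring_1 oct)"
  by (simp add: oct_eval_alt[of "{m}"])
lemma oct_eval_sum: "oct_eval \<alpha> \<beta> \<gamma> \<phi> (\<Sum>i\<in>A. f i) = (\<Sum>i\<in>A. oct_eval \<alpha> \<beta> \<gamma> \<phi> (f i :: 'a::comm_ring_1 fa))"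
  by (induction A rule: infinite_finite_induct) (auto simp: oct_eval_add)

lemma oct_eval_mult: "oct_eval \<alpha> \<beta> \<gamma> \<phi> (fa_mult p q) = oct_mult \<alpha> \<beta> \<gamma> (oct_eval \<alpha> \<beta> \<gamma> \<phi> p) (oct_eval \<alpha> \<beta> \<gamma> \<phi> (q::'a::comm_ring_1 fa))"
proof -
  have "oct_eval \<alpha> \<beta> \<gamma> \<phi> (fa_mult p q) = (\<Sum>m\<in>PK p. \<Sum>n\<in>PK q. oct_smul (PL p m * PL q n) (oct_mult \<alpha> \<beta> \<gamma> (oct_meval \<alpha> \<beta> \<gamma> \<phi> m) (oct_meval \<alpha> \<beta> \<gamma> \<phi> n)))"
    unfolding fa_mult_def oct_eval_sum oct_eval_single by simp
  also have "\<dots> = oct_mult \<alpha> \<beta> \<gamma> (oct_eval \<alpha> \<beta> \<gamma> \<phi> p) (oct_eval \<alpha> \<beta> \<gamma> \<phi> q)"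
    unfolding oct_eval_def oct_mult_suml oct_mult_sumr oct_mult_smull oct_mult_smulr oct_smul_smul
    by (subst sum.swap) (simp add: oct_smul_sum oct_smul_smul mult.commute)
  finally show ?thesis .
qed

lemma oct_eval_msubst: "oct_eval \<alpha> \<beta> \<gamma> \<phi> (msubst \<sigma> m) = oct_meval \<alpha> \<beta> \<gamma> (\<lambda>i a. oct_eval \<alpha> \<beta> \<gamma> \<phi> (\<sigma> i a :: 'a::comm_ring_1 fa)) m"
  by (induction m) (simp_all add: oct_eval_mult)

lemma oct_eval_subst: "oct_eval \<alpha> \<beta> \<gamma> \<phi> (fa_subst \<sigma> p) = oct_eval \<alpha> \<beta> \<gamma> (\<lambda>i a. oct_eval \<alpha> \<beta> \<gamma> \<phi> (\<sigma> i a :: 'a::comm_ring_1 fa)) p"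
  unfolding fa_subst_def oct_eval_sum oct_eval_smul oct_eval_msubst
  by (simp add: oct_eval_def)


lemma comp_iff: "x \<in> oct_comp a \<longleftrightarrow> (\<exists>t. x = oct_smul t (ee a :: 'a::comm_ring_1 oct))"
  by (cases a rule: prod_cases3)
     (auto simp: oct_comp_def cd_comp_def comp2_def comp1_def ee_def e2_def e1_def octdefs prod_eq_iff)

lemma gadd_assoc: "gadd (gadd a b) c = gadd a (gadd b c)" by (auto simp: gadd_def)
lemma gadd_comm: "gadd a b = gadd b a" by (auto simp: gadd_def)
lemma gadd_left_comm: "gadd a (gadd b c) = gadd b (gadd a c)" by (auto simp: gadd_def)
lemma gadd_self[simp]: "gadd a a = gzero" by (auto simp: gadd_def gzero_def)
lemma gadd_self2[simp]: "gadd a (gadd a b) = b" by (cases a rule: prod_cases3; cases b rule: prod_cases3) (auto simp: gadd_def)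
lemma gadd_0[simp]: "gadd gzero a = a" "gadd a gzero = a" by (auto simp: gadd_def gzero_def)
lemmas gadd_ac = gadd_assoc gadd_comm gadd_left_comm

lemma gsub2: "gsub {a, b} = {gzero, a, b, gadd a b}"
proof
  show "gsub {a, b} \<subseteq> {gzero, a, b, gadd a b}"
  proof
    fix x assume "x \<in> gsub {a, b}" then show "x \<in> {gzero, a, b, gadd a b}"
      by induction (auto simp: gadd_ac)
  qed
  show "{gzero, a, b, gadd a b} \<subseteq> gsub {a, b}"
    by (auto intro: gsub.intros)
qed

lemma gsub3: "gsub {a, b, c} = {gzero, a, b, c, gadd a b, gadd a c, gadd b c, gadd (gadd a b) c}"
proof
  show "gsub {a, b, c} \<subseteq> {gzero, a, b, c, gadd a b, gadd a c, gadd b c, gadd (gadd a b) c}"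
  proof
    fix x assume "x \<in> gsub {a, b, c}" then show "x \<in> {gzero, a, b, c, gadd a b, gadd a c, gadd b c, gadd (gadd a b) c}"
      by induction (auto simp: gadd_ac)
  qed
  show "{gzero, a, b, c, gadd a b, gadd a c, gadd b c, gadd (gadd a b) c} \<subseteq> gsub {a, b, c}"
    by (auto intro: gsub.intros)
qed

lemma card2_0: "(card {gzero,(a1,a2,a3),(b1,b2,b3),gadd (a1,a2,a3) (b1,b2,b3)} \<le> 2 \<longleftrightarrow>
     ((a1,a2,a3) = gzero \<or> (b1,b2,b3) = gzero \<or> (a1,a2,a3) = (b1,b2,b3))) \<and>
   (card {gzero,(a1,a2,a3),(b1,b2,b3),gadd (a1,a2,a3) (b1,b2,b3)} \<le> 2 \<or> card {gzero,(a1,a2,a3),(b1,b2,b3),gadd (a1,a2,a3) (b1,b2,b3)} \<ge> 4)"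
  by (cases a1; cases a2; cases a3; cases b1; cases b2; cases b3; simp add: gzero_def gadd_def card_insert_if)

lemma card2: "card (gsub {a, b}) \<le> 2 \<longleftrightarrow> (a = gzero \<or> b = gzero \<or> a = b)"
  "card (gsub {a, b}) \<le> 2 \<or> card (gsub {a, b}) \<ge> 4"
  using card2_0[of "fst a" "fst (snd a)" "snd (snd a)" "fst b" "fst (snd b)" "snd (snd b)"]
  unfolding prod.collapse gsub2 by blast+

lemma card3': "card (gsub {a, b, c}) \<le> 4 \<longleftrightarrow> dep3 a b c"
  "card (gsub {a, b, c}) \<le> 4 \<or> card (gsub {a, b, c}) = 8"
  using card3[of "fst a" "fst (snd a)" "snd (snd a)" "fst b" "fst (snd b)" "snd (snd b)" "fst c" "fst (snd c)" "snd (snd c)"]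
  unfolding prod.collapse gsub3 Let_def by blast+

lemma card_UNIV_grp: "card (UNIV :: grp set) = 8"
  by (simp add: UNIV_Times_UNIV[symmetric] card_cartesian_product del: UNIV_Times_UNIV)

lemma gsub3_UNIV: "gsub {a, b, c} = UNIV \<longleftrightarrow> \<not> dep3 a b c"
proof
  assume "gsub {a, b, c} = UNIV"
  then have "card (gsub {a, b, c}) = 8" by (simp add: card_UNIV_grp)
  then show "\<not> dep3 a b c" using card3'(1)[of a b c] by simp
next
  assume "\<not> dep3 a b c"
  then have "card (gsub {a, b, c}) = 8" using card3'(1)[of a b c] card3'(2)[of a b c] by auto
  then show "gsub {a, b, c} = UNIV"
    by (metis card_UNIV_grp card_subset_eq finite top_greatest)
qed


lemma negs_comm0: "(a1,a2,a3) = gzero \<or> (b1,b2,b3) = gzero \<or> (a1,a2,a3) = (b1,b2,b3) \<Longrightarrow> negs (a1,a2,a3) (b1,b2,b3) = negs (b1,b2,b3) (a1,a2,a3)"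
  by (cases a1; cases a2; cases a3; cases b1; cases b2; cases b3; simp add: negs_def gzero_def)

definition mg :: "'a::comm_ring_1 \<Rightarrow> 'a \<Rightarrow> 'a \<Rightarrow> grp \<Rightarrow> grp \<Rightarrow> 'a" where
  "mg \<alpha> \<beta> \<gamma> a b = ((if fst a \<and> fst b then \<alpha> else 1) * (if fst (snd a) \<and> fst (snd b) then \<beta> else 1) *
      (if snd (snd a) \<and> snd (snd b) then \<gamma> else 1))"
definition sg :: "grp \<Rightarrow> grp \<Rightarrow> 'a::comm_ring_1" where
  "sg a b = (if negs a b then -1 else 1)"

lemma cc_split: "cc \<alpha> \<beta> \<gamma> a b = sg a b * mg \<alpha> \<beta> \<gamma> a b"
  by (simp add: cc_def sg_def mg_def)

lemma mg_sym: "mg \<alpha> \<beta> \<gamma> a b = mg \<alpha> \<beta> \<gamma> b a"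
  by (simp add: mg_def conj_commute)

lemma mcoc: "(if x \<and> y then k else 1) * (if (x \<noteq> y) \<and> z then k else 1) =
   (if y \<and> z then k else 1) * (if x \<and> (y \<noteq> z) then (k::'a::comm_ring_1) else 1)"
  by (cases x; cases y; cases z; simp)

lemma mg_coc: "mg \<alpha> \<beta> \<gamma> a b * mg \<alpha> \<beta> \<gamma> (gadd a b) c = mg \<alpha> \<beta> \<gamma> b c * mg \<alpha> \<beta> \<gamma> a (gadd b c)"
proof -
  have "mg \<alpha> \<beta> \<gamma> a b * mg \<alpha> \<beta> \<gamma> (gadd a b) c =
     ((if fst a \<and> fst b then \<alpha> else 1) * (if (fst a \<noteq> fst b) \<and> fst c then \<alpha> else 1)) *
     ((if fst (snd a) \<and> fst (snd b) then \<beta> else 1) * (if (fst (snd a) \<noteq> fst (snd b)) \<and> fst (snd c) then \<beta> else 1)) *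
     ((if snd (snd a) \<and> snd (snd b) then \<gamma> else 1) * (if (snd (snd a) \<noteq> snd (snd b)) \<and> snd (snd c) then \<gamma> else 1))"
    by (simp add: mg_def gadd_def mult_ac)
  also have "\<dots> = ((if fst b \<and> fst c then \<alpha> else 1) * (if fst a \<and> (fst b \<noteq> fst c) then \<alpha> else 1)) *
     ((if fst (snd b) \<and> fst (snd c) then \<beta> else 1) * (if fst (snd a) \<and> (fst (snd b) \<noteq> fst (snd c)) then \<beta> else 1)) *
     ((if snd (snd b) \<and> snd (snd c) then \<gamma> else 1) * (if snd (snd a) \<and> (snd (snd b) \<noteq> snd (snd c)) then \<gamma> else 1))"
    by (simp only: mcoc)
  also have "\<dots> = mg \<alpha> \<beta> \<gamma> b c * mg \<alpha> \<beta> \<gamma> a (gadd b c)"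
    by (simp add: mg_def gadd_def mult_ac)
  finally show ?thesis .
qed

lemma cc_comm: "a = gzero \<or> b = gzero \<or> a = b \<Longrightarrow> cc \<alpha> \<beta> \<gamma> a b = cc \<alpha> \<beta> \<gamma> b a"
  using negs_comm0[of "fst a" "fst (snd a)" "snd (snd a)" "fst b" "fst (snd b)" "snd (snd b)"]
  by (simp add: cc_split sg_def mg_sym)

lemma cc_anti: "\<not> (a = gzero \<or> b = gzero \<or> a = b) \<Longrightarrow> cc \<alpha> \<beta> \<gamma> a b = - cc \<alpha> \<beta> \<gamma> b a"
  using negs_anti0[of "fst a" "fst (snd a)" "snd (snd a)" "fst b" "fst (snd b)" "snd (snd b)"]
  by (auto simp: cc_split sg_def mg_sym)

lemma cc_assoc: "cc \<alpha> \<beta> \<gamma> a b * cc \<alpha> \<beta> \<gamma> (gadd a b) c =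
   (if dep3 a b c then 1 else -1) * (cc \<alpha> \<beta> \<gamma> b c * cc \<alpha> \<beta> \<gamma> a (gadd b c))"
proof -
  have s: "(negs a b \<noteq> negs (gadd a b) c) = (negs b c \<noteq> negs a (gadd b c)) \<longleftrightarrow> dep3 a b c"
    using negs_assoc0[of "fst a" "fst (snd a)" "snd (snd a)" "fst b" "fst (snd b)" "snd (snd b)" "fst c" "fst (snd c)" "snd (snd c)"]
    by simp
  have "cc \<alpha> \<beta> \<gamma> a b * cc \<alpha> \<beta> \<gamma> (gadd a b) c = (sg a b * sg (gadd a b) c) * (mg \<alpha> \<beta> \<gamma> a b * mg \<alpha> \<beta> \<gamma> (gadd a b) c)"
    by (simp add: cc_split mult_ac)
  also have "\<dots> = (sg a b * sg (gadd a b) c) * (mg \<alpha> \<beta> \<gamma> b c * mg \<alpha> \<beta> \<gamma> a (gadd b c))"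
    by (simp add: mg_coc)
  also have "sg a b * sg (gadd a b) c = (if dep3 a b c then 1 else -1) * (sg b c * (sg a (gadd b c)::'a))"
    using s by (auto simp: sg_def)
  finally show ?thesis by (simp add: cc_split mult_ac)
qed

lemma oct_mult_smul2: "oct_mult \<alpha> \<beta> \<gamma> (oct_smul s x) (oct_smul t y) = oct_smul (s*t) (oct_mult \<alpha> \<beta> \<gamma> x (y::'a::comm_ring_1 oct))"
  by (simp add: oct_mult_smull oct_mult_smulr oct_smul_smul mult.commute)

lemma comp_mult: "x \<in> oct_comp a \<Longrightarrow> y \<in> oct_comp b \<Longrightarrow> oct_mult \<alpha> \<beta> \<gamma> x (y::'a::comm_ring_1 oct) \<in> oct_comp (gadd a b)"
  by (auto simp: comp_iff oct_mult_smul2 e_mult oct_smul_smul)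
lemma comp_add: "x \<in> oct_comp a \<Longrightarrow> y \<in> oct_comp a \<Longrightarrow> x + (y::'a::comm_ring_1 oct) \<in> oct_comp a"
  by (auto simp: comp_iff oct_smul_addc[symmetric])
lemma comp_zero: "(0::'a::comm_ring_1 oct) \<in> oct_comp a"
  by (auto simp: comp_iff intro: exI[of _ 0])
lemma comp_smul: "x \<in> oct_comp a \<Longrightarrow> oct_smul c (x::'a::comm_ring_1 oct) \<in> oct_comp a"
  by (auto simp: comp_iff oct_smul_smul)
lemma comp_sum: "(\<And>i. i \<in> A \<Longrightarrow> f i \<in> oct_comp a) \<Longrightarrow> (\<Sum>i\<in>A. f i :: 'a::comm_ring_1 oct) \<in> oct_comp a"
  by (induction A rule: infinite_finite_induct) (auto simp: comp_zero comp_add)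

lemma meval_comp: "(\<forall>i a. \<phi> i a \<in> oct_comp a) \<Longrightarrow> oct_meval \<alpha> \<beta> \<gamma> \<phi> m \<in> oct_comp (mdeg m :: grp)"
  by (induction m) (auto intro: comp_mult)

lemma eval_comp: "(\<forall>i a. \<phi> i a \<in> oct_comp a) \<Longrightarrow> fa_homog g p \<Longrightarrow> oct_eval \<alpha> \<beta> \<gamma> \<phi> (p::'a::comm_ring_1 fa) \<in> oct_comp g"
  unfolding oct_eval_def fa_homog_def
  by (rule comp_sum) (metis comp_smul meval_comp)


lemma oct_eval_var[simp]: "oct_eval \<alpha> \<beta> \<gamma> \<phi> (fa_var i a) = (\<phi> i a :: 'a::comm_ring_1 oct)"
  by (simp add: fa_var_def oct_eval_single)

lemma e_comm: "a = gzero \<or> b = gzero \<or> a = b \<Longrightarrow> oct_mult \<alpha> \<beta> \<gamma> (ee a) (ee b) = (oct_mult \<alpha> \<beta> \<gamma> (ee b) (ee a) :: 'a::comm_ring_1 oct)"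
  by (metis cc_comm e_mult gadd_comm)
lemma e_anti: "\<not> (a = gzero \<or> b = gzero \<or> a = b) \<Longrightarrow> oct_mult \<alpha> \<beta> \<gamma> (ee a) (ee b) = - (oct_mult \<alpha> \<beta> \<gamma> (ee b) (ee a) :: 'a::comm_ring_1 oct)"
  by (simp add: e_mult cc_anti gadd_comm oct_smul_m1[symmetric] oct_smul_smul)
lemma e_assoc: "oct_mult \<alpha> \<beta> \<gamma> (oct_mult \<alpha> \<beta> \<gamma> (ee a) (ee b)) (ee c) =
   oct_smul (if dep3 a b c then 1 else -1) (oct_mult \<alpha> \<beta> \<gamma> (ee a) (oct_mult \<alpha> \<beta> \<gamma> (ee b) (ee c)) :: 'a::comm_ring_1 oct)"
  by (simp add: e_mult oct_mult_smull oct_mult_smulr oct_smul_smul cc_assoc[of \<alpha> \<beta> \<gamma> a b c] gadd_assoc mult_ac)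

lemma gens_TG: "p \<in> oct_gens \<Longrightarrow> (p::'a::comm_ring_1 fa) \<in> oct_TG \<alpha> \<beta> \<gamma>"
proof -
  assume p: "p \<in> oct_gens"
  show ?thesis unfolding oct_TG_def
  proof (intro CollectI allI impI)
    fix \<phi> :: "nat \<Rightarrow> grp \<Rightarrow> 'a oct"
    assume gr: "\<forall>i a. \<phi> i a \<in> oct_comp a"
    have ph: "\<exists>t. \<phi> i a = oct_smul t (ee a)" for i a using gr comp_iff by blast
    from p show "oct_eval \<alpha> \<beta> \<gamma> \<phi> p = 0"
      unfolding oct_gens_def
    proof (elim UnE CollectE exE conjE)
      fix a b assume "p = fa_comm (fa_var 1 a) (fa_var 2 b)" "card (gsub {a, b}) \<le> 2"
      moreover obtain s t where "\<phi> 1 a = oct_smul s (ee a)" "\<phi> 2 b = oct_smul t (ee b)" using ph by metis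
      ultimately show ?thesis
        by (simp add: fa_comm_def oct_eval_minus oct_eval_mult oct_mult_smul2 card2 e_comm[of a b] mult.commute)
    next
      fix a b assume "p = fa_jordan (fa_var 1 a) (fa_var 2 b)" "4 \<le> card (gsub {a, b})"
      moreover obtain s t where "\<phi> 1 a = oct_smul s (ee a)" "\<phi> 2 b = oct_smul t (ee b)" using ph by metis
      moreover have "\<not> (a = gzero \<or> b = gzero \<or> a = b)" using card2(1)[of a b] calculation(2) by auto
      ultimately show ?thesis
        by (simp add: fa_jordan_def oct_eval_add oct_eval_mult oct_mult_smul2 e_anti[of a b] mult.commute oct_smul_uminus)
    next
      fix a b c assume "p = fa_assoc (fa_var 1 a) (fa_var 2 b) (fa_var 3 c)" "card (gsub {a, b, c}) \<le> 4"
      moreover obtain s t u where "\<phi> 1 a = oct_smul s (ee a)" "\<phi> 2 b = oct_smul t (ee b)" "\<phi> 3 c = oct_smul u (ee c)" using ph by metis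
      moreover have "dep3 a b c" using card3'(1)[of a b c] calculation(2) by auto
      ultimately show ?thesis
        by (simp add: fa_assoc_def oct_eval_minus oct_eval_mult oct_mult_smul2 e_assoc[of \<alpha> \<beta> \<gamma> a b c] mult_ac)
    next
      fix a b c assume "p = fa_mult (fa_mult (fa_var 1 a) (fa_var 2 b)) (fa_var 3 c) + fa_mult (fa_var 1 a) (fa_mult (fa_var 2 b) (fa_var 3 c))"
        "gsub {a, b, c} = UNIV"
      moreover obtain s t u where "\<phi> 1 a = oct_smul s (ee a)" "\<phi> 2 b = oct_smul t (ee b)" "\<phi> 3 c = oct_smul u (ee c)" using ph by metis
      moreover have "\<not> dep3 a b c" using gsub3_UNIV[of a b c] calculation(2) by auto
      ultimately show ?thesis
        by (simp add: oct_eval_add oct_eval_mult oct_mult_smul2 e_assoc[of \<alpha> \<beta> \<gamma> a b c] mult_ac oct_smul_m1 oct_smul_uminus)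
    qed
  qed
qed

lemma TG_subst: "p \<in> oct_TG \<alpha> \<beta> \<gamma> \<Longrightarrow> graded_subst \<sigma> \<Longrightarrow> fa_subst \<sigma> (p::'a::comm_ring_1 fa) \<in> oct_TG \<alpha> \<beta> \<gamma>"
proof -
  assume p: "p \<in> oct_TG \<alpha> \<beta> \<gamma>" and s: "graded_subst \<sigma>"
  show ?thesis unfolding oct_TG_def
  proof (intro CollectI allI impI)
    fix \<phi> :: "nat \<Rightarrow> grp \<Rightarrow> 'a oct"
    assume gr: "\<forall>i a. \<phi> i a \<in> oct_comp a"
    have "\<forall>i a. oct_eval \<alpha> \<beta> \<gamma> \<phi> (\<sigma> i a) \<in> oct_comp a"
      using s gr by (auto simp: graded_subst_def intro!: eval_comp)
    then show "oct_eval \<alpha> \<beta> \<gamma> \<phi> (fa_subst \<sigma> p) = 0"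
      using p by (simp add: oct_TG_def oct_eval_subst)
  qed
qed

lemma gTideal_TG: "p \<in> gTideal oct_gens \<Longrightarrow> (p::'a::comm_ring_1 fa) \<in> oct_TG \<alpha> \<beta> \<gamma>"
proof (induction rule: gTideal.induct)
  case (gT_gen p) then show ?case by (rule gens_TG)
next
  case gT_zero then show ?case by (simp add: oct_TG_def)
next
  case (gT_add p q) then show ?case by (simp add: oct_TG_def oct_eval_add)
next
  case (gT_smul p c) then show ?case by (simp add: oct_TG_def oct_eval_smul)
next
  case (gT_multl p r) then show ?case by (simp add: oct_TG_def oct_eval_mult)
next
  case (gT_multr p r) then show ?case by (simp add: oct_TG_def oct_eval_mult)
next
  case (gT_subst p \<sigma>) then show ?case using TG_subst by blast
qed


abbreviation II where "II \<equiv> gTideal oct_gens"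

lemma I_minus: "p \<in> II \<Longrightarrow> q \<in> II \<Longrightarrow> p - q \<in> (II :: 'a::comm_ring_1 fa set)"
  by (metis diff_conv_add_uminus fa_smul_m1 gT_add gT_smul)

lemma I_sum: "(\<And>i. i \<in> A \<Longrightarrow> f i \<in> II) \<Longrightarrow> (\<Sum>i\<in>A. f i) \<in> (II :: 'a::comm_ring_1 fa set)"
  by (induction A rule: infinite_finite_induct) (auto intro: gT_zero gT_add)

definition sig :: "mon \<Rightarrow> mon \<Rightarrow> mon \<Rightarrow> nat \<Rightarrow> grp \<Rightarrow> 'a::comm_ring_1 fa" where
  "sig u v w i d = (if i = 1 \<and> d = mdeg u then Poly_Mapping.single u 1 else
     if i = 2 \<and> d = mdeg v then Poly_Mapping.single v 1 else
     if i = 3 \<and> d = mdeg w then Poly_Mapping.single w 1 else 0)"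

lemma sig_graded: "graded_subst (sig u v w)"
  by (auto simp: graded_subst_def sig_def fa_homog_def)

lemma subst_var: "fa_subst \<sigma> (fa_var i a) = (\<sigma> i a :: 'a::comm_ring_1 fa)"
  by (simp add: fa_var_def fa_subst_single)

lemma fa_var_mult: "fa_mult (fa_var i a) (fa_var j b) = (Poly_Mapping.single (Mul (Var i a) (Var j b)) 1 :: 'a::comm_ring_1 fa)"
  by (simp add: fa_var_def fa_mult_single)

lemma subst_mult2: "fa_subst \<sigma> (fa_mult (fa_var i a) (fa_var j b)) = fa_mult (\<sigma> i a) (\<sigma> j b :: 'a::comm_ring_1 fa)"
  by (simp add: fa_var_mult fa_subst_single)

lemma subst_mult3l: "fa_subst \<sigma> (fa_mult (fa_mult (fa_var i a) (fa_var j b)) (fa_var k c)) = fa_mult (fa_mult (\<sigma> i a) (\<sigma> j b)) (\<sigma> k c :: 'a::comm_ring_1 fa)"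
  by (simp add: fa_var_mult fa_var_def fa_mult_single fa_subst_single)
lemma subst_mult3r: "fa_subst \<sigma> (fa_mult (fa_var i a) (fa_mult (fa_var j b) (fa_var k c))) = fa_mult (\<sigma> i a) (fa_mult (\<sigma> j b) (\<sigma> k c :: 'a::comm_ring_1 fa))"
  by (simp add: fa_var_mult fa_var_def fa_mult_single fa_subst_single)

abbreviation sg1 :: "mon \<Rightarrow> 'a::comm_ring_1 \<Rightarrow> 'a fa" where "sg1 m c \<equiv> Poly_Mapping.single m c"

lemma I_comm: "sg1 (Mul u v) 1 - sg1 (Mul v u) (if mdeg u = gzero \<or> mdeg v = gzero \<or> mdeg u = mdeg v then 1 else -1) \<in> (II :: 'a::comm_ring_1 fa set)"
proof (cases "mdeg u = gzero \<or> mdeg v = gzero \<or> mdeg u = mdeg v")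
  case True
  let ?p = "fa_comm (fa_var 1 (mdeg u)) (fa_var 2 (mdeg v)) :: 'a fa"
  have "?p \<in> oct_gens" unfolding oct_gens_def using True card2(1)[of "mdeg u" "mdeg v"] by blast
  then have "fa_subst (sig u v w) ?p \<in> II" by (intro gT_subst gT_gen sig_graded)
  then show ?thesis using True
    by (simp add: fa_comm_def fa_subst_minus subst_mult2 sig_def fa_mult_single)
next
  case False
  let ?p = "fa_jordan (fa_var 1 (mdeg u)) (fa_var 2 (mdeg v)) :: 'a fa"
  have "card (gsub {mdeg u, mdeg v}) \<ge> 4" using False card2[of "mdeg u" "mdeg v"] by auto
  then have "?p \<in> oct_gens" unfolding oct_gens_def by blast
  then have "fa_subst (sig u v w) ?p \<in> II" by (intro gT_subst gT_gen sig_graded)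
  then show ?thesis using False
    by (simp add: fa_jordan_def fa_subst_add subst_mult2 sig_def fa_mult_single single_uminus)
qed

lemma I_assoc: "sg1 (Mul (Mul u v) w) 1 - sg1 (Mul u (Mul v w)) (if dep3 (mdeg u) (mdeg v) (mdeg w) then 1 else -1) \<in> (II :: 'a::comm_ring_1 fa set)"
proof (cases "dep3 (mdeg u) (mdeg v) (mdeg w)")
  case True
  let ?p = "fa_assoc (fa_var 1 (mdeg u)) (fa_var 2 (mdeg v)) (fa_var 3 (mdeg w)) :: 'a fa"
  have "?p \<in> oct_gens" unfolding oct_gens_def using True card3'(1)[of "mdeg u" "mdeg v" "mdeg w"] by blast
  then have "fa_subst (sig u v w) ?p \<in> II" by (intro gT_subst gT_gen sig_graded)
  then show ?thesis using True
    by (simp add: fa_assoc_def fa_subst_minus subst_mult3l subst_mult3r sig_def fa_mult_single)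
next
  case False
  let ?p = "fa_mult (fa_mult (fa_var 1 (mdeg u)) (fa_var 2 (mdeg v))) (fa_var 3 (mdeg w))
        + fa_mult (fa_var 1 (mdeg u)) (fa_mult (fa_var 2 (mdeg v)) (fa_var 3 (mdeg w))) :: 'a fa"
  have "gsub {mdeg u, mdeg v, mdeg w} = UNIV" using False gsub3_UNIV by blast
  then have "?p \<in> oct_gens" unfolding oct_gens_def by blast
  then have "fa_subst (sig u v w) ?p \<in> II" by (intro gT_subst gT_gen sig_graded)
  then show ?thesis using False
    by (simp add: fa_subst_add subst_mult3l subst_mult3r sig_def fa_mult_single single_uminus)
qed


definition mrel :: "'a::comm_ring_1 itself \<Rightarrow> mon \<Rightarrow> mon \<Rightarrow> bool" where
  "mrel T m m' \<longleftrightarrow> (\<exists>\<epsilon>::'a. (\<epsilon> = 1 \<or> \<epsilon> = -1) \<and> sg1 m 1 - sg1 m' \<epsilon> \<in> II)"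

lemma mrel_refl: "mrel TYPE('a::comm_ring_1) m m"
  unfolding mrel_def by (rule exI[of _ 1]) (simp add: gT_zero)

lemma mrel_sym: "mrel TYPE('a::comm_ring_1) m m' \<Longrightarrow> mrel TYPE('a) m' m"
  unfolding mrel_def
proof (elim exE conjE)
  fix \<epsilon> :: 'a assume e: "\<epsilon> = 1 \<or> \<epsilon> = -1" and i: "sg1 m 1 - sg1 m' \<epsilon> \<in> II"
  have "fa_smul (-\<epsilon>) (sg1 m 1 - sg1 m' \<epsilon>) = sg1 m' 1 - sg1 m \<epsilon>"
    using e by (auto simp: fa_smul_minus fa_smul_single single_uminus)
  then have "sg1 m' 1 - sg1 m \<epsilon> \<in> II" using gT_smul[OF i] by metis
  then show "\<exists>\<epsilon>::'a. (\<epsilon> = 1 \<or> \<epsilon> = -1) \<and> sg1 m' 1 - sg1 m \<epsilon> \<in> II" using e by blast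
qed

lemma mrel_trans: "mrel TYPE('a::comm_ring_1) m m' \<Longrightarrow> mrel TYPE('a) m' m'' \<Longrightarrow> mrel TYPE('a) m m''"
  unfolding mrel_def
proof (elim exE conjE)
  fix \<epsilon>1 \<epsilon>2 :: 'a assume e1: "\<epsilon>1 = 1 \<or> \<epsilon>1 = -1" and i1: "sg1 m 1 - sg1 m' \<epsilon>1 \<in> II"
    and e2: "\<epsilon>2 = 1 \<or> \<epsilon>2 = -1" and i2: "sg1 m' 1 - sg1 m'' \<epsilon>2 \<in> II"
  have "(sg1 m 1 - sg1 m' \<epsilon>1) + fa_smul \<epsilon>1 (sg1 m' 1 - sg1 m'' \<epsilon>2) = sg1 m 1 - sg1 m'' (\<epsilon>1 * \<epsilon>2)"
    by (simp add: fa_smul_minus fa_smul_single)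
  then have "sg1 m 1 - sg1 m'' (\<epsilon>1 * \<epsilon>2) \<in> II" using gT_add[OF i1 gT_smul[OF i2]] by metis
  moreover have "\<epsilon>1 * \<epsilon>2 = 1 \<or> \<epsilon>1 * \<epsilon>2 = -1" using e1 e2 by auto
  ultimately show "\<exists>\<epsilon>::'a. (\<epsilon> = 1 \<or> \<epsilon> = -1) \<and> sg1 m 1 - sg1 m'' \<epsilon> \<in> II" by blast
qed

declare mrel_trans[trans]

lemma mrel_congl: "mrel TYPE('a::comm_ring_1) u u' \<Longrightarrow> mrel TYPE('a) (Mul u v) (Mul u' v)"
  unfolding mrel_def
proof (elim exE conjE)
  fix \<epsilon> :: 'a assume e: "\<epsilon> = 1 \<or> \<epsilon> = -1" and i: "sg1 u 1 - sg1 u' \<epsilon> \<in> II"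
  have "fa_mult (sg1 u 1 - sg1 u' \<epsilon>) (sg1 v 1) = sg1 (Mul u v) 1 - sg1 (Mul u' v) \<epsilon>"
    by (simp add: fa_mult_minusl fa_mult_single)
  then show "\<exists>\<epsilon>::'a. (\<epsilon> = 1 \<or> \<epsilon> = -1) \<and> sg1 (Mul u v) 1 - sg1 (Mul u' v) \<epsilon> \<in> II"
    using gT_multr[OF i] e by metis
qed

lemma mrel_congr: "mrel TYPE('a::comm_ring_1) v v' \<Longrightarrow> mrel TYPE('a) (Mul u v) (Mul u v')"
  unfolding mrel_def
proof (elim exE conjE)
  fix \<epsilon> :: 'a assume e: "\<epsilon> = 1 \<or> \<epsilon> = -1" and i: "sg1 v 1 - sg1 v' \<epsilon> \<in> II"
  have "fa_mult (sg1 u 1) (sg1 v 1 - sg1 v' \<epsilon>) = sg1 (Mul u v) 1 - sg1 (Mul u v') \<epsilon>"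
    by (simp add: fa_mult_minusr fa_mult_single)
  then show "\<exists>\<epsilon>::'a. (\<epsilon> = 1 \<or> \<epsilon> = -1) \<and> sg1 (Mul u v) 1 - sg1 (Mul u v') \<epsilon> \<in> II"
    using gT_multl[OF i] e by metis
qed

lemma mrel_comm: "mrel TYPE('a::comm_ring_1) (Mul u v) (Mul v u)"
  unfolding mrel_def
  by (rule exI[where x="if mdeg u = gzero \<or> mdeg v = gzero \<or> mdeg u = mdeg v then 1 else -1"])
     (intro conjI, simp, rule I_comm)

lemma mrel_assoc: "mrel TYPE('a::comm_ring_1) (Mul (Mul u v) w) (Mul u (Mul v w))"
  unfolding mrel_def
  by (rule exI[where x="if dep3 (mdeg u) (mdeg v) (mdeg w) then 1 else -1"])
     (intro conjI, simp, rule I_assoc)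

fun lv :: "mon \<Rightarrow> (nat \<times> grp) list" where
  "lv (Var i a) = [(i, a)]"
| "lv (Mul u v) = lv u @ lv v"

fun nf :: "(nat \<times> grp) list \<Rightarrow> mon" where
  "nf [] = Var 0 gzero"
| "nf [(i, a)] = Var i a"
| "nf ((i, a) # y # ys) = Mul (Var i a) (nf (y # ys))"

lemma lv_nonempty: "lv m \<noteq> []"
  by (induction m) auto

lemma insort_nonempty: "insort x xs \<noteq> []"
  by (cases xs) auto

lemma nf_cons: "xs \<noteq> [] \<Longrightarrow> nf ((i, a) # xs) = Mul (Var i a) (nf xs)"
  by (cases xs) auto

lemma mrel_insort: "xs \<noteq> [] \<Longrightarrow> mrel TYPE('a::comm_ring_1) (Mul (Var i a) (nf xs)) (nf (insort (i, a) xs))"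
proof (induction xs)
  case Nil then show ?case by simp
next
  case (Cons y ys)
  obtain j b where y: "y = (j, b)" by (cases y)
  show ?case
  proof (cases "(i, a) \<le> y")
    case True
    then show ?thesis by (simp add: nf_cons mrel_refl)
  next
    case False
    then have ins: "insort (i, a) (y # ys) = y # insort (i, a) ys" by simp
    show ?thesis unfolding ins
    proof (cases "ys = []")
      case True
      then show "mrel TYPE('a) (Mul (Var i a) (nf (y # ys))) (nf (y # insort (i, a) ys))"
        using y by (simp add: mrel_comm)
    next
      case ne: False
      have "mrel TYPE('a) (Mul (Var i a) (Mul (Var j b) (nf ys))) (Mul (Mul (Var i a) (Var j b)) (nf ys))"
        by (rule mrel_sym, rule mrel_assoc)
      also have "mrel TYPE('a) \<dots> (Mul (Mul (Var j b) (Var i a)) (nf ys))"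
        by (rule mrel_congl, rule mrel_comm)
      also have "mrel TYPE('a) \<dots> (Mul (Var j b) (Mul (Var i a) (nf ys)))"
        by (rule mrel_assoc)
      also have "mrel TYPE('a) \<dots> (Mul (Var j b) (nf (insort (i, a) ys)))"
        by (rule mrel_congr, rule Cons.IH[OF ne])
      finally show "mrel TYPE('a) (Mul (Var i a) (nf (y # ys))) (nf (y # insort (i, a) ys))"
        using y ne by (simp add: nf_cons insort_nonempty)
    qed
  qed
qed


lemma mset_foldr_insort: "mset (foldr insort xs ys) = mset xs + mset ys"
  by (induction xs) auto

lemma sorted_foldr_insort: "sorted ys \<Longrightarrow> sorted (foldr insort xs ys)"
  by (induction xs) (auto simp: sorted_insort)

lemma foldr_insort_nonempty: "ys \<noteq> [] \<Longrightarrow> foldr insort xs ys \<noteq> []"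
  by (cases xs) (auto simp: insort_nonempty)

lemma mrel_merge: "xs \<noteq> [] \<Longrightarrow> ys \<noteq> [] \<Longrightarrow> mrel TYPE('a::comm_ring_1) (Mul (nf xs) (nf ys)) (nf (foldr insort xs ys))"
proof (induction xs)
  case Nil then show ?case by simp
next
  case (Cons x xs)
  obtain i a where x: "x = (i, a)" by (cases x)
  show ?case
  proof (cases "xs = []")
    case True
    then show ?thesis using x Cons.prems mrel_insort[of ys i a] by simp
  next
    case ne: False
    have "mrel TYPE('a) (Mul (Mul (Var i a) (nf xs)) (nf ys)) (Mul (Var i a) (Mul (nf xs) (nf ys)))"
      by (rule mrel_assoc)
    also have "mrel TYPE('a) \<dots> (Mul (Var i a) (nf (foldr insort xs ys)))"
      by (rule mrel_congr, rule Cons.IH[OF ne Cons.prems(2)])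
    also have "mrel TYPE('a) \<dots> (nf (insort (i, a) (foldr insort xs ys)))"
      by (rule mrel_insort, rule foldr_insort_nonempty[OF Cons.prems(2)])
    finally show ?thesis using x ne by (simp add: nf_cons)
  qed
qed

lemma mrel_nf: "mrel TYPE('a::comm_ring_1) m (nf (sort (lv m)))"
proof (induction m)
  case (Var i a) then show ?case by (simp add: mrel_refl)
next
  case (Mul u v)
  have "mrel TYPE('a) (Mul u v) (Mul (nf (sort (lv u))) v)" by (rule mrel_congl, rule Mul.IH(1))
  also have "mrel TYPE('a) \<dots> (Mul (nf (sort (lv u))) (nf (sort (lv v))))" by (rule mrel_congr, rule Mul.IH(2))
  also have "mrel TYPE('a) \<dots> (nf (foldr insort (sort (lv u)) (sort (lv v))))"
    by (rule mrel_merge) (metis length_0_conv length_sort lv_nonempty)+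
  also have "foldr insort (sort (lv u)) (sort (lv v)) = sort (lv (Mul u v))"
    by (rule properties_for_sort[symmetric]) (auto simp: mset_foldr_insort sorted_foldr_insort)
  finally show ?case .
qed


lemma univ_zero:
  fixes c :: "nat \<Rightarrow> 'a::idom"
  assumes inf: "infinite (UNIV::'a set)" and z: "\<And>s. (\<Sum>k<n. c k * s ^ k) = 0" and k: "k < n"
  shows "c k = 0"
proof -
  define p where "p = (\<Sum>j<n. monom (c j) j)"
  have ev: "poly p s = 0" for s using z[of s] by (simp add: p_def poly_sum poly_monom)
  have "p = 0"
  proof (rule ccontr)
    assume "p \<noteq> 0"
    then have "finite {x. poly p x = 0}" by (rule poly_roots_finite)
    then show False using ev inf by simp
  qed
  then have "coeff p k = 0" by simp
  moreover have "coeff p k = c k" using k by (simp add: p_def coeff_sum)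
  ultimately show ?thesis by simp
qed

lemma mset_split_v: "M = filter_mset (\<lambda>x. x \<noteq> v) M + replicate_mset (count M v) v"
  by (rule multiset_eqI) (auto simp: count_replicate_mset)

lemma mpoly_zero_aux:
  fixes d :: "'v multiset \<Rightarrow> 'a::idom"
  assumes inf: "infinite (UNIV::'a set)" and fV: "finite V"
  shows "\<And>\<M> d. finite \<M> \<Longrightarrow> (\<forall>M\<in>\<M>. set_mset M \<subseteq> V) \<Longrightarrow>
    (\<forall>t. (\<Sum>M\<in>\<M>. d M * prod_mset (image_mset t M)) = (0::'a)) \<Longrightarrow> \<forall>M\<in>\<M>. d M = 0"
  using fV
proof (induction V rule: finite_induct)
  case empty
  then have "\<M> \<subseteq> {{#}}" by auto
  then show ?case using empty.prems(3)
    by (cases "\<M> = {}") (auto dest: subset_singletonD)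
next
  case (insert v V)
  note fM = insert.prems(1)
  define n where "n = Suc (Max ((\<lambda>M. count M v) ` \<M> \<union> {0}))"
  have cn: "count M v < n" if "M \<in> \<M>" for M
    using that fM by (auto simp: n_def less_Suc_eq_le)
  define N where "N k = (\<lambda>M. filter_mset (\<lambda>x. x \<noteq> v) M) ` {M\<in>\<M>. count M v = k}" for k
  define dk where "dk k X = d (X + replicate_mset k v)" for k X
  have inj: "inj_on (\<lambda>M. filter_mset (\<lambda>x. x \<noteq> v) M) {M\<in>\<M>. count M v = k}" for k
    by (rule inj_onI) (metis (mono_tags, lifting) mem_Collect_eq mset_split_v)
  have key: "(\<Sum>M\<in>\<M>. d M * prod_mset (image_mset t M)) =
      (\<Sum>k<n. (\<Sum>X\<in>N k. dk k X * prod_mset (image_mset t X)) * t v ^ k)" for t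
  proof -
    have "(\<Sum>M\<in>\<M>. d M * prod_mset (image_mset t M)) =
        (\<Sum>k<n. \<Sum>M\<in>{M\<in>\<M>. count M v = k}. d M * prod_mset (image_mset t M))"
      by (rule sum.group[symmetric]) (use fM cn in auto)
    also have "\<dots> = (\<Sum>k<n. (\<Sum>X\<in>N k. dk k X * prod_mset (image_mset t X)) * t v ^ k)"
    proof (rule sum.cong[OF refl])
      fix k
      have "(\<Sum>X\<in>N k. dk k X * prod_mset (image_mset t X)) =
          (\<Sum>M\<in>{M\<in>\<M>. count M v = k}. dk k (filter_mset (\<lambda>x. x \<noteq> v) M) * prod_mset (image_mset t (filter_mset (\<lambda>x. x \<noteq> v) M)))"
        unfolding N_def by (rule sum.reindex[OF inj, unfolded comp_def])
      also have "\<dots> * t v ^ k = (\<Sum>M\<in>{M\<in>\<M>. count M v = k}. d M * prod_mset (image_mset t M))"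
        unfolding sum_distrib_right
      proof (rule sum.cong[OF refl])
        fix M assume "M \<in> {M\<in>\<M>. count M v = k}"
        then have ck: "count M v = k" by simp
        have "d M * prod_mset (image_mset t M) = d (filter_mset (\<lambda>x. x \<noteq> v) M + replicate_mset k v) *
           prod_mset (image_mset t (filter_mset (\<lambda>x. x \<noteq> v) M + replicate_mset k v))"
          using mset_split_v[of M v] ck by simp
        then show "dk k (filter_mset (\<lambda>x. x \<noteq> v) M) * prod_mset (image_mset t (filter_mset (\<lambda>x. x \<noteq> v) M)) * t v ^ k =
            d M * prod_mset (image_mset t M)"
          by (simp add: dk_def mult_ac)
      qed
      finally show "(\<Sum>M\<in>{M\<in>\<M>. count M v = k}. d M * prod_mset (image_mset t M)) =
          (\<Sum>X\<in>N k. dk k X * prod_mset (image_mset t X)) * t v ^ k" by simp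
    qed
    finally show ?thesis .
  qed
  have Nsub: "\<forall>X\<in>N k. set_mset X \<subseteq> V" for k
    using insert.prems(2) by (auto simp: N_def)
  have Nindep: "prod_mset (image_mset (t(v := s)) X) = prod_mset (image_mset t X)" if "X \<in> N k" for t s X k
  proof -
    have "v \<notin># X" using that by (auto simp: N_def)
    then have "image_mset (t(v := s)) X = image_mset t X"
      by (intro image_mset_cong) auto
    then show ?thesis by simp
  qed
  have C0: "(\<Sum>X\<in>N k. dk k X * prod_mset (image_mset t X)) = 0" if "k < n" for k t
  proof -
    have "(\<Sum>j<n. (\<Sum>X\<in>N j. dk j X * prod_mset (image_mset t X)) * s ^ j) = 0" for s
    proof -
      have "(\<Sum>j<n. (\<Sum>X\<in>N j. dk j X * prod_mset (image_mset t X)) * s ^ j) =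
          (\<Sum>j<n. (\<Sum>X\<in>N j. dk j X * prod_mset (image_mset (t(v:=s)) X)) * (t(v:=s)) v ^ j)"
        by (intro sum.cong refl arg_cong2[where f="(*)"]) (simp_all add: Nindep)
      also have "\<dots> = 0" using key[of "t(v:=s)"] insert.prems(3) by simp
      finally show ?thesis .
    qed
    then show ?thesis
      using univ_zero[OF inf _ that, of "\<lambda>j. \<Sum>X\<in>N j. dk j X * prod_mset (image_mset t X)"] by blast
  qed
  have fN: "finite (N k)" for k using fM by (auto simp: N_def)
  have "\<forall>X\<in>N k. dk k X = 0" if "k < n" for k
    by (rule insert.IH[OF fN Nsub]) (use C0 that in auto)
  then show ?case
  proof (intro ballI)
    fix M assume M: "M \<in> \<M>"
    assume all: "\<And>k. k < n \<Longrightarrow> \<forall>X\<in>N k. dk k X = 0"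
    have "filter_mset (\<lambda>x. x \<noteq> v) M \<in> N (count M v)" using M by (auto simp: N_def)
    then have "dk (count M v) (filter_mset (\<lambda>x. x \<noteq> v) M) = 0" using all cn[OF M] by blast
    then show "d M = 0" by (simp add: dk_def mset_split_v[of M v, symmetric])
  qed
qed

lemma mpoly_zero:
  fixes d :: "'v multiset \<Rightarrow> 'a::idom"
  assumes inf: "infinite (UNIV::'a set)" and "finite \<M>"
    and "\<And>t. (\<Sum>M\<in>\<M>. d M * prod_mset (image_mset t M)) = 0" and "M \<in> \<M>"
  shows "d M = 0"
  using mpoly_zero_aux[OF inf, of "\<Union>M\<in>\<M>. set_mset M" \<M> d] assms by auto


definition coord :: "grp \<Rightarrow> 'a::comm_ring_1 oct \<Rightarrow> 'a" where
  "coord g x = (let y = (if snd (snd g) then snd x else fst x);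
                    z = (if fst (snd g) then snd y else fst y) in (if fst g then snd z else fst z))"

lemma coord_add: "coord g (x + y) = coord g x + coord g (y::'a::comm_ring_1 oct)"
  by (simp add: coord_def Let_def)
lemma coord_zero[simp]: "coord g (0::'a::comm_ring_1 oct) = 0"
  by (simp add: coord_def Let_def)
lemma coord_sum: "coord g (\<Sum>i\<in>A. f i) = (\<Sum>i\<in>A. coord g (f i :: 'a::comm_ring_1 oct))"
  by (induction A rule: infinite_finite_induct) (auto simp: coord_add)
lemma coord_e: "coord g (oct_smul s (ee h)) = (if g = h then s else (0::'a::comm_ring_1))"
  by (cases g rule: prod_cases3; cases h rule: prod_cases3)
     (auto simp: coord_def Let_def ee_def e2_def e1_def octdefs)

fun kap :: "'a::comm_ring_1 \<Rightarrow> 'a \<Rightarrow> 'a \<Rightarrow> mon \<Rightarrow> 'a" where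
  "kap \<alpha> \<beta> \<gamma> (Var i a) = 1"
| "kap \<alpha> \<beta> \<gamma> (Mul u v) = kap \<alpha> \<beta> \<gamma> u * kap \<alpha> \<beta> \<gamma> v * cc \<alpha> \<beta> \<gamma> (mdeg u) (mdeg v)"

lemma cc_nz: "\<alpha> \<noteq> 0 \<Longrightarrow> \<beta> \<noteq> 0 \<Longrightarrow> \<gamma> \<noteq> 0 \<Longrightarrow> cc \<alpha> \<beta> \<gamma> a b \<noteq> (0::'a::idom)"
  by (simp add: cc_def)

lemma kap_nz: "\<alpha> \<noteq> 0 \<Longrightarrow> \<beta> \<noteq> 0 \<Longrightarrow> \<gamma> \<noteq> 0 \<Longrightarrow> kap \<alpha> \<beta> \<gamma> m \<noteq> (0::'a::idom)"
  by (induction m) (simp_all add: cc_nz)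

lemma meval_t: "oct_meval \<alpha> \<beta> \<gamma> (\<lambda>i a. oct_smul (t (i, a)) (ee a)) m =
   oct_smul (kap \<alpha> \<beta> \<gamma> m * prod_mset (image_mset t (mset (lv m)))) (ee (mdeg m) :: 'a::comm_ring_1 oct)"
  by (induction m) (simp_all add: oct_mult_smul2 e_mult oct_smul_smul mult_ac)

lemma lv_nf: "xs \<noteq> [] \<Longrightarrow> lv (nf xs) = xs"
  by (induction xs rule: nf.induct) auto

lemma single_sum: "Poly_Mapping.single k (\<Sum>i\<in>A. f i) = (\<Sum>i\<in>A. Poly_Mapping.single k (f i :: 'a::comm_monoid_add))"
  by (induction A rule: infinite_finite_induct) (auto simp: single_add)

lemma sort_inj: "sorted xs \<Longrightarrow> sorted ys \<Longrightarrow> mset xs = mset ys \<Longrightarrow> xs = (ys :: ('b::linorder) list)"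
  by (metis properties_for_sort sorted_sort_id)


lemma completeness:
  fixes \<alpha> \<beta> \<gamma> :: "'a::idom"
  assumes inf: "infinite (UNIV :: 'a set)"
    and nz: "\<alpha> \<noteq> 0" "\<beta> \<noteq> 0" "\<gamma> \<noteq> 0"
    and fT: "f \<in> oct_TG \<alpha> \<beta> \<gamma>"
  shows "f \<in> (II :: 'a fa set)"
proof -
  define L where "L m = sort (lv m)" for m
  define \<epsilon> where "\<epsilon> m = (SOME e::'a. (e = 1 \<or> e = -1) \<and> sg1 m 1 - sg1 (nf (L m)) e \<in> II)" for m
  have eps: "(\<epsilon> m = 1 \<or> \<epsilon> m = -1) \<and> sg1 m 1 - sg1 (nf (L m)) (\<epsilon> m) \<in> II" for m
  proof -
    have "\<exists>e::'a. (e = 1 \<or> e = -1) \<and> sg1 m 1 - sg1 (nf (L m)) e \<in> II"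
      using mrel_nf[of m, where 'a='a] unfolding mrel_def L_def .
    then show ?thesis unfolding \<epsilon>_def by (rule someI_ex)
  qed
  define K where "K = PK f"
  have fK: "finite K" by (simp add: K_def)
  define c where "c m = PL f m * \<epsilon> m" for m
  define g where "g = (\<Sum>m\<in>K. sg1 (nf (L m)) (c m))"
  have fsum: "f = (\<Sum>m\<in>K. sg1 m (PL f m))" by (simp add: K_def pm_sum_single)
  have "f - g = (\<Sum>m\<in>K. fa_smul (PL f m) (sg1 m 1 - sg1 (nf (L m)) (\<epsilon> m)))"
    by (subst fsum) (simp add: g_def c_def fa_smul_minus fa_smul_single sum_subtractf)
  then have fg: "f - g \<in> II" using eps by (auto intro!: I_sum gT_smul)
  have gTG: "g \<in> oct_TG \<alpha> \<beta> \<gamma>"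
  proof -
    have "f - g \<in> oct_TG \<alpha> \<beta> \<gamma>" using fg by (rule gTideal_TG)
    then show ?thesis using fT by (auto simp: oct_TG_def oct_eval_minus)
  qed
  define \<phi> where "\<phi> t i a = oct_smul (t (i, a)) (ee a :: 'a oct)" for t :: "nat \<times> grp \<Rightarrow> 'a" and i a
  have phgr: "\<forall>i a. \<phi> t i a \<in> oct_comp a" for t by (auto simp: \<phi>_def comp_iff)
  have ev: "(\<Sum>m\<in>K. oct_smul (c m) (oct_meval \<alpha> \<beta> \<gamma> (\<phi> t) (nf (L m)))) = 0" for t
  proof -
    have "oct_eval \<alpha> \<beta> \<gamma> (\<phi> t) g = 0" using gTG phgr by (auto simp: oct_TG_def)
    then show ?thesis by (simp add: g_def oct_eval_sum oct_eval_single)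
  qed
  define Ls where "Ls = L ` K"
  have fLs: "finite Ls" using fK by (simp add: Ls_def)
  have Lne: "\<Lambda> \<noteq> []" if "\<Lambda> \<in> Ls" for \<Lambda>
    using that lv_nonempty by (auto simp: Ls_def L_def) (metis length_0_conv length_sort lv_nonempty)
  have Lsorted: "sorted \<Lambda>" if "\<Lambda> \<in> Ls" for \<Lambda> using that by (auto simp: Ls_def L_def)
  define D where "D \<Lambda> = (\<Sum>m\<in>{m\<in>K. L m = \<Lambda>}. c m)" for \<Lambda>
  have ceq: "(\<Sum>\<Lambda>\<in>Ls. (if g0 = mdeg (nf \<Lambda>) then D \<Lambda> * kap \<alpha> \<beta> \<gamma> (nf \<Lambda>) else 0) *
        prod_mset (image_mset t (mset \<Lambda>))) = 0" for g0 t
  proof -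
    have "0 = coord g0 (\<Sum>m\<in>K. oct_smul (c m) (oct_meval \<alpha> \<beta> \<gamma> (\<phi> t) (nf (L m))))"
      using ev by simp
    also have "\<dots> = (\<Sum>m\<in>K. c m * (if g0 = mdeg (nf (L m)) then kap \<alpha> \<beta> \<gamma> (nf (L m)) * prod_mset (image_mset t (mset (L m))) else 0))"
    proof (rule trans[OF coord_sum sum.cong[OF refl]])
      fix m assume "m \<in> K"
      then have "L m \<in> Ls" by (simp add: Ls_def)
      then have "lv (nf (L m)) = L m" using Lne by (simp add: lv_nf)
      then show "coord g0 (oct_smul (c m) (oct_meval \<alpha> \<beta> \<gamma> (\<phi> t) (nf (L m)))) =
          c m * (if g0 = mdeg (nf (L m)) then kap \<alpha> \<beta> \<gamma> (nf (L m)) * prod_mset (image_mset t (mset (L m))) else 0)"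
        unfolding \<phi>_def meval_t oct_smul_smul coord_e by simp
    qed
    also have "\<dots> = (\<Sum>\<Lambda>\<in>Ls. \<Sum>m\<in>{m\<in>K. L m = \<Lambda>}. c m * (if g0 = mdeg (nf (L m)) then kap \<alpha> \<beta> \<gamma> (nf (L m)) * prod_mset (image_mset t (mset (L m))) else 0))"
      by (rule sum.group[symmetric]) (use fK fLs in \<open>auto simp: Ls_def\<close>)
    also have "\<dots> = (\<Sum>\<Lambda>\<in>Ls. (if g0 = mdeg (nf \<Lambda>) then D \<Lambda> * kap \<alpha> \<beta> \<gamma> (nf \<Lambda>) else 0) *
        prod_mset (image_mset t (mset \<Lambda>)))"
    proof (rule sum.cong[OF refl])
      fix \<Lambda>
      have "(\<Sum>m\<in>{m\<in>K. L m = \<Lambda>}. c m * (if g0 = mdeg (nf (L m)) then kap \<alpha> \<beta> \<gamma> (nf (L m)) * prod_mset (image_mset t (mset (L m))) else 0)) =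
            (\<Sum>m\<in>{m\<in>K. L m = \<Lambda>}. c m * (if g0 = mdeg (nf \<Lambda>) then kap \<alpha> \<beta> \<gamma> (nf \<Lambda>) * prod_mset (image_mset t (mset \<Lambda>)) else 0))"
        by (rule sum.cong) auto
      also have "\<dots> = (if g0 = mdeg (nf \<Lambda>) then D \<Lambda> * kap \<alpha> \<beta> \<gamma> (nf \<Lambda>) else 0) * prod_mset (image_mset t (mset \<Lambda>))"
        by (cases "g0 = mdeg (nf \<Lambda>)") (simp_all add: D_def sum_distrib_right[symmetric] mult_ac)
      finally show "(\<Sum>m\<in>{m\<in>K. L m = \<Lambda>}. c m * (if g0 = mdeg (nf (L m)) then kap \<alpha> \<beta> \<gamma> (nf (L m)) * prod_mset (image_mset t (mset (L m))) else 0)) =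
            (if g0 = mdeg (nf \<Lambda>) then D \<Lambda> * kap \<alpha> \<beta> \<gamma> (nf \<Lambda>) else 0) * prod_mset (image_mset t (mset \<Lambda>))" .
    qed
    finally show ?thesis by simp
  qed
  have injm: "inj_on mset Ls" by (rule inj_onI) (use Lsorted sort_inj in blast)
  have Dz: "D \<Lambda> = 0" if \<Lambda>: "\<Lambda> \<in> Ls" for \<Lambda>
  proof -
    let ?g0 = "mdeg (nf \<Lambda>)"
    let ?sl = "sorted_list_of_multiset :: (nat \<times> grp) multiset \<Rightarrow> _"
    define d where "d M = (if ?g0 = mdeg (nf (?sl M)) then D (?sl M) * kap \<alpha> \<beta> \<gamma> (nf (?sl M)) else 0)" for M
    have sl: "?sl (mset \<Lambda>') = \<Lambda>'" if "\<Lambda>' \<in> Ls" for \<Lambda>'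
      using Lsorted[OF that] by (simp add: sorted_sort_id)
    have "(\<Sum>M\<in>mset ` Ls. d M * prod_mset (image_mset t M)) = 0" for t
    proof -
      have "(\<Sum>M\<in>mset ` Ls. d M * prod_mset (image_mset t M)) = (\<Sum>\<Lambda>'\<in>Ls. d (mset \<Lambda>') * prod_mset (image_mset t (mset \<Lambda>')))"
        by (rule sum.reindex[OF injm, unfolded comp_def])
      also have "\<dots> = (\<Sum>\<Lambda>'\<in>Ls. (if ?g0 = mdeg (nf \<Lambda>') then D \<Lambda>' * kap \<alpha> \<beta> \<gamma> (nf \<Lambda>') else 0) *
        prod_mset (image_mset t (mset \<Lambda>')))"
        by (rule sum.cong[OF refl]) (simp add: d_def sorted_sort_id[OF Lsorted])
      also have "\<dots> = 0" by (rule ceq)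
      finally show ?thesis .
    qed
    note Z = this
    have "d (mset \<Lambda>) = 0"
      by (rule mpoly_zero[OF inf finite_imageI[OF fLs] Z imageI[OF \<Lambda>]])
    then have "D \<Lambda> * kap \<alpha> \<beta> \<gamma> (nf \<Lambda>) = 0" by (simp add: d_def sorted_sort_id[OF Lsorted[OF \<Lambda>]])
    then show ?thesis using kap_nz[OF nz] by simp
  qed
  have "g = (\<Sum>\<Lambda>\<in>Ls. \<Sum>m\<in>{m\<in>K. L m = \<Lambda>}. sg1 (nf (L m)) (c m))"
    unfolding g_def by (rule sum.group[symmetric]) (use fK fLs in \<open>auto simp: Ls_def\<close>)
  also have "\<dots> = (\<Sum>\<Lambda>\<in>Ls. sg1 (nf \<Lambda>) (D \<Lambda>))"
    by (rule sum.cong[OF refl]) (simp add: D_def single_sum)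
  also have "\<dots> = 0" by (simp add: Dz)
  finally have "g = 0" .
  then show ?thesis using fg by simp
qed


theorem mainTheorem2:
  fixes \<alpha> \<beta> \<gamma> :: "'a::idom"
  assumes "infinite (UNIV :: 'a set)"
    and "(2::'a) \<noteq> 0"
    and "\<alpha> \<noteq> 0" and "\<beta> \<noteq> 0" and "\<gamma> \<noteq> 0"
  shows "oct_TG \<alpha> \<beta> \<gamma> = gTideal (oct_gens :: 'a fa set)"
proof
  show "oct_TG \<alpha> \<beta> \<gamma> \<subseteq> gTideal (oct_gens :: 'a fa set)"
    using completeness[OF assms(1) assms(3-5)] by blast
  show "gTideal (oct_gens :: 'a fa set) \<subseteq> oct_TG \<alpha> \<beta> \<gamma>"
    using gTideal_TG by blast
qed

end
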